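(* Let $u,v\in\mathbb{Z}_2^n$ with $d=d_{\mathcal H}(u,v)\le2\varepsilon$ and $\varepsilon/n<1/2$. Then $$\mathcal{I}^\varepsilon_d\le 2^{n\left(h\left(\frac{\varepsilon-\lceil d/2\rceil}{n}\right)-1\right)+d}\le 2^{n(h(\varepsilon/n)-1)+d}\left(\frac{\varepsilon/n}{1-\varepsilon/n}\right)^{\lceil d/2\rceil}.$$
   Context: $d_{\mathcal H}$ is the Hamming distance, $B_\varepsilon(t)=\{y:d_{\mathcal H}(t,y)\le\varepsilon\}$, and $\mathcal{I}^\varepsilon_d=|B_\varepsilon(u)\cap B_\varepsilon(v)|/2^n=\frac{1}{2^n}\sum_{k=\max(0,d-\varepsilon)}^{\min(\varepsilon,d)}\sum_{i=0}^{\min(\varepsilon-k,\varepsilon-d+k)}\binom dk\binom{n-d}{i}$. $h(x)=-x\log_2x-(1-x)\log_2(1-x)$ is the binary entropy function (with $h(0)=0$). *)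

theory Defs
  imports Complex_Main
begin

text \<open>Vectors of Z_2^n are represented as boolean lists of length n.\<close>

definition hamming_dist :: "bool list \<Rightarrow> bool list \<Rightarrow> nat" where
  "hamming_dist x y = card {i. i < length x \<and> x ! i \<noteq> y ! i}"

definition hcube :: "nat \<Rightarrow> bool list set" where
  "hcube n = {x. length x = n}"

definition hball :: "nat \<Rightarrow> nat \<Rightarrow> bool list \<Rightarrow> bool list set" where
  "hball n eps t = {y \<in> hcube n. hamming_dist t y \<le> eps}"

definition ball_inter :: "nat \<Rightarrow> nat \<Rightarrow> bool list \<Rightarrow> bool list \<Rightarrow> real" where
  "ball_inter n eps u v = real (card (hball n eps u \<inter> hball n eps v)) / 2 ^ n"

definition bin_entropy :: "real \<Rightarrow> real" where
  "bin_entropy x = (if x = 0 \<or> x = 1 then 0 else - x * log 2 x - (1 - x) * log 2 (1 - x))"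

end

theory Submission
  imports Defs
begin

lemma gibbs:
  fixes p q :: real
  assumes "0 \<le> q" "q \<le> p" "p < 1/2" "0 < p"
  shows "bin_entropy q \<le> bin_entropy p + (p - q) * log 2 (p / (1 - p))"
proof -
  have p1: "0 < 1 - p" using assms by simp
  have hp: "bin_entropy p = - p * log 2 p - (1 - p) * log 2 (1 - p)"
    using assms by (simp add: bin_entropy_def)
  have lr: "log 2 (p / (1 - p)) = log 2 p - log 2 (1 - p)"
    using assms p1 by (simp add: log_divide)
  have rhs: "bin_entropy p + (p - q) * log 2 (p / (1 - p)) = - q * log 2 p - (1 - q) * log 2 (1 - p)"
    unfolding hp lr by (simp add: algebra_simps)
  show ?thesis
  proof (cases "q = 0")
    case True
    have "log 2 (1 - p) \<le> 0" using assms p1 by simp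
    then show ?thesis unfolding rhs using True by (simp add: bin_entropy_def)
  next
    case False
    then have q0: "0 < q" using assms by simp
    have q1: "0 < 1 - q" using assms by simp
    have hq: "bin_entropy q = - q * log 2 q - (1 - q) * log 2 (1 - q)"
      using assms q0 by (simp add: bin_entropy_def)
    have a: "q * ln (p / q) \<le> p - q"
    proof -
      have "ln (p/q) \<le> p/q - 1" using ln_le_minus_one assms q0 by simp
      then have "q * ln (p/q) \<le> q * (p/q - 1)" using q0 by (simp add: mult_left_mono)
      also have "\<dots> = p - q" using q0 by (simp add: field_simps)
      finally show ?thesis .
    qed
    have b: "(1 - q) * ln ((1 - p) / (1 - q)) \<le> q - p"
    proof -
      have "ln ((1 - p) / (1 - q)) \<le> (1 - p) / (1 - q) - 1" using ln_le_minus_one p1 q1 by simp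
      then have "(1 - q) * ln ((1 - p) / (1 - q)) \<le> (1 - q) * ((1 - p) / (1 - q) - 1)" using q1 by (simp add: mult_left_mono)
      also have "\<dots> = q - p" using q1 by (simp add: field_simps)
      finally show ?thesis .
    qed
    have "q * ln (p / q) + (1 - q) * ln ((1 - p) / (1 - q)) \<le> 0" using a b by simp
    then have "q * (ln p - ln q) + (1 - q) * (ln (1 - p) - ln (1 - q)) \<le> 0"
      using q0 q1 p1 assms by (simp add: ln_div)
    then have "- q * ln q - (1 - q) * ln (1 - q) \<le> - q * ln p - (1 - q) * ln (1 - p)"
      by (simp add: algebra_simps)
    then have "(- q * ln q - (1 - q) * ln (1 - q)) / ln 2 \<le> (- q * ln p - (1 - q) * ln (1 - p)) / ln 2"
      by (intro divide_right_mono) auto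
    then have "- q * log 2 q - (1 - q) * log 2 (1 - q) \<le> - q * log 2 p - (1 - q) * log 2 (1 - p)"
      unfolding log_def by (simp add: diff_divide_distrib)
    then show ?thesis unfolding rhs hq .
  qed
qed

lemma vol_bound:
  fixes n m :: nat
  assumes "2 * m \<le> n \<or> n = 0"
  shows "real (\<Sum>i\<le>m. n choose i) \<le> 2 powr (real n * bin_entropy (real m / real n))"
proof (cases "m = 0 \<or> n = 0")
  case True
  then have "(\<Sum>i\<le>m. n choose i) = 1"
  proof
    assume "m = 0" then show ?thesis by simp
  next
    assume n: "n = 0"
    have "(\<Sum>i\<le>m. n choose i) = (\<Sum>i\<le>m. if i = 0 then 1 else 0)"
      using n by (intro sum.cong) auto
    also have "\<dots> = 1" by (simp add: sum.delta)
    finally show ?thesis .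
  qed
  then show ?thesis using True by (auto simp: bin_entropy_def)
next
  case False
  then have m0: "0 < m" and n0: "0 < n" and mn: "2 * m \<le> n" using assms by auto
  define p where "p = real m / real n"
  have p0: "0 < p" using m0 n0 by (simp add: p_def)
  have ph: "p \<le> 1/2" using mn n0 by (simp add: p_def field_simps)
  have p1: "0 < 1 - p" using ph by simp
  have pp: "p \<le> 1 - p" using ph by simp
  have mle: "m \<le> n" using mn by simp
  have key: "p ^ m * (1 - p) ^ (n - m) \<le> p ^ k * (1 - p) ^ (n - k)" if "k \<le> m" for k
  proof -
    have "p ^ m * (1 - p) ^ (n - m) = p ^ k * p ^ (m - k) * (1 - p) ^ (n - m)"
      using that by (simp add: power_add[symmetric])
    also have "\<dots> \<le> p ^ k * (1 - p) ^ (m - k) * (1 - p) ^ (n - m)"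
      using p0 p1 pp by (intro mult_right_mono mult_left_mono power_mono) auto
    also have "\<dots> = p ^ k * (1 - p) ^ (n - k)"
      using that mle by (simp add: mult.assoc power_add[symmetric])
    finally show ?thesis .
  qed
  have "real (\<Sum>i\<le>m. n choose i) * (p ^ m * (1 - p) ^ (n - m))
        = (\<Sum>i\<le>m. real (n choose i) * (p ^ m * (1 - p) ^ (n - m)))"
    by (simp add: sum_distrib_right)
  also have "\<dots> \<le> (\<Sum>i\<le>m. real (n choose i) * (p ^ i * (1 - p) ^ (n - i)))"
    using key by (intro sum_mono mult_left_mono) auto
  also have "\<dots> \<le> (\<Sum>i\<le>n. real (n choose i) * (p ^ i * (1 - p) ^ (n - i)))"
    using mle p0 p1 by (intro sum_mono2) auto
  also have "\<dots> = (p + (1 - p)) ^ n"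
    unfolding binomial_ring by (simp add: mult.assoc)
  also have "\<dots> = 1" by simp
  finally have S: "real (\<Sum>i\<le>m. n choose i) * (p ^ m * (1 - p) ^ (n - m)) \<le> 1" .
  have hp: "bin_entropy p = - p * log 2 p - (1 - p) * log 2 (1 - p)"
    using p0 ph by (simp add: bin_entropy_def)
  have pw: "x ^ k = 2 powr (real k * log 2 x)" if "0 < x" for x :: real and k :: nat
  proof -
    have "2 powr (real k * log 2 x) = (2 powr (log 2 x)) powr real k" by (simp add: powr_powr mult.commute)
    also have "\<dots> = x ^ k" using that by (simp add: powr_realpow)
    finally show ?thesis by simp
  qed
  have e1: "p ^ m = 2 powr (real m * log 2 p)" using pw p0 by blast
  have e2: "(1 - p) ^ (n - m) = 2 powr (real (n - m) * log 2 (1 - p))" using pw p1 by blast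
  have ex: "real m * log 2 p + real (n - m) * log 2 (1 - p) = - (real n * bin_entropy p)"
  proof -
    have "real m = real n * p" using n0 by (simp add: p_def)
    moreover have "real (n - m) = real n * (1 - p)" using n0 mle by (simp add: p_def field_simps of_nat_diff)
    ultimately show ?thesis unfolding hp by (simp add: algebra_simps)
  qed
  have W: "p ^ m * (1 - p) ^ (n - m) = 2 powr (- (real n * bin_entropy p))"
    unfolding e1 e2 ex[symmetric] by (simp add: powr_add)
  have "real (\<Sum>i\<le>m. n choose i) \<le> 1 / 2 powr (- (real n * bin_entropy p))"
    using S unfolding W by (simp add: field_simps)
  also have "\<dots> = 2 powr (real n * bin_entropy p)" by (simp add: powr_minus field_simps)
  finally show ?thesis by (simp add: p_def)
qed



lemma card_le_subsets:
  "card {B. B \<subseteq> {..<n} \<and> card B \<le> m} = (\<Sum>i\<le>m. n choose i)"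
proof -
  have eq: "{B. B \<subseteq> {..<n} \<and> card B \<le> m} = (\<Union>i\<in>{..m}. {B. B \<subseteq> {..<n} \<and> card B = i})"
    by auto
  have "card (\<Union>i\<in>{..m}. {B. B \<subseteq> {..<n} \<and> card B = i}) = (\<Sum>i\<le>m. card {B. B \<subseteq> {..<n} \<and> card B = i})"
    by (intro card_UN_disjoint) auto
  also have "\<dots> = (\<Sum>i\<le>m. n choose i)" by (simp add: n_subsets)
  finally show ?thesis unfolding eq .
qed

lemma count_bound:
  fixes n eps :: nat and u v :: "bool list"
  assumes lu: "length u = n" and lv: "length v = n"
  shows "card (hball n eps u \<inter> hball n eps v)
     \<le> 2 ^ hamming_dist u v * (\<Sum>i\<le>eps - (hamming_dist u v + 1) div 2. n choose i)"
proof -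
  define d where "d = hamming_dist u v"
  define m where "m = eps - (d + 1) div 2"
  define D where "D = {i. i < n \<and> u ! i \<noteq> v ! i}"
  have dD: "d = card D" using lu by (simp add: d_def D_def hamming_dist_def)
  have fD: "finite D" by (simp add: D_def)
  define S where "S = (\<lambda>y::bool list. {i. i < n \<and> u ! i \<noteq> y ! i})"
  define F where "F = (\<lambda>y. (S y \<inter> D, S y - D))"
  define X where "X = {B. B \<subseteq> {..<n} \<and> card B \<le> m}"
  let ?I = "hball n eps u \<inter> hball n eps v"
  have inj: "inj_on F ?I"
  proof (rule inj_onI)
    fix y z assume y: "y \<in> ?I" and z: "z \<in> ?I" and e: "F y = F z"
    have ly: "length y = n" and lz: "length z = n" using y z by (auto simp: hball_def hcube_def)
    have Se: "S y = S z"
    proof -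
      have "S y = (S y \<inter> D) \<union> (S y - D)" by blast
      also have "\<dots> = (S z \<inter> D) \<union> (S z - D)" using e by (simp add: F_def)
      also have "\<dots> = S z" by blast
      finally show ?thesis .
    qed
    show "y = z"
    proof (rule nth_equalityI)
      show "length y = length z" using ly lz by simp
      fix i assume "i < length y"
      then have i: "i < n" using ly by simp
      have "(u ! i \<noteq> y ! i) = (u ! i \<noteq> z ! i)"
      proof -
        have "(i \<in> S y) = (i \<in> S z)" using Se by simp
        then show ?thesis using i by (simp add: S_def)
      qed
      then show "y ! i = z ! i" by blast
    qed
  qed
  have sub: "F ` ?I \<subseteq> Pow D \<times> X"
  proof
    fix w assume "w \<in> F ` ?I"
    then obtain y where y: "y \<in> ?I" and w: "w = F y" by blast
    have ly: "length y = n" using y by (auto simp: hball_def hcube_def)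
    have fS: "finite (S y)" by (simp add: S_def)
    have c1: "card (S y) \<le> eps" using y lu by (simp add: hball_def hamming_dist_def S_def)
    have T: "{i. i < n \<and> v ! i \<noteq> y ! i} = (S y - D) \<union> (D - S y)"
      unfolding S_def D_def by auto
    have c2: "card ((S y - D) \<union> (D - S y)) \<le> eps"
      using y lv T by (simp add: hball_def hamming_dist_def)
    have a1: "card (S y) = card (S y \<inter> D) + card (S y - D)"
      using fS by (rule card_Int_Diff)
    have a2: "card ((S y - D) \<union> (D - S y)) = card (S y - D) + card (D - S y)"
      using fS fD by (intro card_Un_disjoint) auto
    have a3: "card D = card (S y \<inter> D) + card (D - S y)"
      using card_Int_Diff[OF fD, of "S y"] by (simp add: Int_commute)
    have "card (S y - D) \<le> m" unfolding m_def dD using a1 a2 a3 c1 c2 by linarith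
    moreover have "S y - D \<subseteq> {..<n}" by (auto simp: S_def)
    ultimately show "w \<in> Pow D \<times> X" unfolding w F_def X_def by auto
  qed
  have "card ?I = card (F ` ?I)" using inj by (simp add: card_image)
  also have "\<dots> \<le> card (Pow D \<times> X)"
    using sub fD by (intro card_mono) (auto simp: X_def)
  also have "\<dots> = 2 ^ d * (\<Sum>i\<le>m. n choose i)"
    using fD by (simp add: card_cartesian_product card_Pow dD X_def card_le_subsets)
  finally show ?thesis unfolding d_def m_def .
qed


theorem lemma4p13:
  fixes n eps d :: nat and u v :: "bool list"
  assumes "length u = n" and "length v = n"
    and "d = hamming_dist u v" and "d \<le> 2 * eps"
    and "real eps / real n < 1 / 2"
  shows "ball_inter n eps u v
           \<le> 2 powr (real n * (bin_entropy ((real eps - real ((d + 1) div 2)) / real n) - 1) + real d)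
         \<and> 2 powr (real n * (bin_entropy ((real eps - real ((d + 1) div 2)) / real n) - 1) + real d)
           \<le> 2 powr (real n * (bin_entropy (real eps / real n) - 1) + real d)
             * ((real eps / real n) / (1 - real eps / real n)) ^ ((d + 1) div 2)"
proof -
  define c where "c = (d + 1) div 2"
  define m where "m = eps - c"
  have ce: "c \<le> eps" using assms(4) by (simp add: c_def)
  have rm: "real eps - real c = real m" using ce by (simp add: m_def of_nat_diff)
  have dn: "d = 0" if "n = 0" using assms(1,3) that by (simp add: hamming_dist_def)
  have pre: "2 * m \<le> n \<or> n = 0"
  proof (cases "n = 0")
    case False
    then have "2 * real eps < real n" using assms(5) by (simp add: field_simps)
    then show ?thesis by (simp add: m_def)
  qed simp
  have part1: "ball_inter n eps u v \<le> 2 powr (real n * (bin_entropy (real m / real n) - 1) + real d)"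
  proof -
    have cb: "real (card (hball n eps u \<inter> hball n eps v)) \<le> 2 ^ d * real (\<Sum>i\<le>m. n choose i)"
    proof -
      have "card (hball n eps u \<inter> hball n eps v) \<le> 2 ^ d * (\<Sum>i\<le>m. n choose i)"
        using count_bound[OF assms(1,2), of eps] assms(3) by (simp add: m_def c_def)
      then have "real (card (hball n eps u \<inter> hball n eps v)) \<le> real (2 ^ d * (\<Sum>i\<le>m. n choose i))"
        by (simp only: of_nat_le_iff)
      then show ?thesis by (simp only: of_nat_mult of_nat_power of_nat_numeral)
    qed
    have "ball_inter n eps u v \<le> 2 ^ d * real (\<Sum>i\<le>m. n choose i) / 2 ^ n"
      unfolding ball_inter_def using cb by (simp add: divide_right_mono)
    also have "\<dots> \<le> 2 ^ d * 2 powr (real n * bin_entropy (real m / real n)) / 2 ^ n"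
      using vol_bound[OF pre] by (intro divide_right_mono mult_left_mono) auto
    also have "\<dots> = 2 powr (real n * (bin_entropy (real m / real n) - 1) + real d)"
      by (simp add: algebra_simps powr_add powr_diff powr_realpow)
    finally show ?thesis .
  qed
  have part2: "2 powr (real n * (bin_entropy (real m / real n) - 1) + real d)
           \<le> 2 powr (real n * (bin_entropy (real eps / real n) - 1) + real d)
             * ((real eps / real n) / (1 - real eps / real n)) ^ c"
  proof (cases "c = 0")
    case True
    then show ?thesis by (simp add: m_def)
  next
    case False
    then have d0: "d > 0" by (simp add: c_def)
    then have n0: "n > 0" using dn by auto
    then have e0: "eps > 0" using False ce by simp
    define p where "p = real eps / real n"
    define r where "r = p / (1 - p)"
    have p0: "0 < p" using n0 e0 by (simp add: p_def)
    have ph: "p < 1/2" using assms(5) by (simp add: p_def)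
    have r0: "0 < r" using p0 ph by (simp add: r_def)
    have q: "real m / real n = p - real c / real n"
      using rm[symmetric] n0 by (simp add: p_def diff_divide_distrib)
    have q0: "0 \<le> real m / real n" by simp
    have g: "bin_entropy (real m / real n) \<le> bin_entropy p + (real c / real n) * log 2 r"
      using gibbs[OF q0 _ ph p0] q unfolding r_def by simp
    have "real n * bin_entropy (real m / real n) \<le> real n * (bin_entropy p + (real c / real n) * log 2 r)"
      using g by (intro mult_left_mono) auto
    also have "\<dots> = real n * bin_entropy p + real c * log 2 r"
      using n0 by (simp add: algebra_simps)
    finally have ex: "real n * (bin_entropy (real m / real n) - 1) + real d
        \<le> (real n * (bin_entropy p - 1) + real d) + real c * log 2 r"
      by (simp add: algebra_simps)
    have pw: "r ^ c = 2 powr (real c * log 2 r)"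
    proof -
      have "2 powr (real c * log 2 r) = (2 powr (log 2 r)) powr real c" by (simp add: powr_powr mult.commute)
      also have "\<dots> = r ^ c" using r0 by (simp add: powr_realpow)
      finally show ?thesis by simp
    qed
    have "2 powr (real n * (bin_entropy (real m / real n) - 1) + real d)
        \<le> 2 powr ((real n * (bin_entropy p - 1) + real d) + real c * log 2 r)"
      using ex by simp
    also have "\<dots> = 2 powr (real n * (bin_entropy p - 1) + real d) * r ^ c"
      unfolding pw by (simp add: powr_add)
    finally show ?thesis unfolding r_def p_def .
  qed
  show ?thesis using part1 part2 rm unfolding c_def by simp
qed

end
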